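(* Let $m\ge 2$ and let $C_1,\dots,C_m\subset\mathbb{R}^n$ be nonempty, closed, convex, pairwise disjoint sets, and assume either all $C_i$ are bounded, or for every $j$ with $C_j$ unbounded and every sequence $(a^{(k)})\subset C_j$ with $\|a^{(k)}\|\to\infty$, at least one of $d_{C_{j-1}}(a^{(k)})\to\infty$, $d_{C_{j+1}}(a^{(k)})\to\infty$ holds (cyclic indices). Let $D(a)=\sum_{i=1}^m\|a_i-a_{i+1}\|$ ($a_{m+1}=a_1$). Let $a_i^{(0)}\in C_i$ and let $(\alpha_k)$ be positive step sizes with $\sum_k\alpha_k=\infty$ and $\sum_k\alpha_k^2<\infty$. Define iteratively, for $i=1,\dots,m$, $$g_i^{(k)}=\frac{a_i^{(k)}-a_{i-1}^{(k)}}{\|a_i^{(k)}-a_{i-1}^{(k)}\|}+\frac{a_i^{(k)}-a_{i+1}^{(k)}}{\|a_i^{(k)}-a_{i+1}^{(k)}\|},\qquad a_i^{(k+1)}=\operatorname{proj}_{C_i}\big(a_i^{(k)}-\alpha_k g_i^{(k)}\big),$$ with cyclic indices $a_0^{(k)}=a_m^{(k)}$, $a_{m+1}^{(k)}=a_1^{(k)}$. Then the sequence $(a_1^{(k)},\dots,a_m^{(k)})$ converges to an optimal solution $(a_1^*,\dots,a_m^* )$ of $\min_{a\in C_1\times\cdots\times C_m}D(a)$, and $D(a_1^{(k)},\dots,a_m^{(k)})$ converges to the optimal value $D^*=\min_{a\in C}D(a)$.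
   Context: $\operatorname{proj}_K(x)$ denotes the (unique) Euclidean projection of $x$ onto a nonempty closed convex set $K$, i.e. the point of $K$ nearest to $x$. $d_K(x)=\inf_{y\in K}\|x-y\|$. The vector $g_i^{(k)}$ is well defined because consecutive iterates lie in disjoint sets. *)

theory Defs
  imports "HOL-Analysis.Analysis"
begin

text \<open>Sets and points are indexed by 0..m-1 (the paper uses 1..m); cyclic neighbours.\<close>

definition cprev :: "nat \<Rightarrow> nat \<Rightarrow> nat" where
  "cprev m i = (i + m - 1) mod m"

definition cnext :: "nat \<Rightarrow> nat \<Rightarrow> nat" where
  "cnext m i = (i + 1) mod m"

definition perim :: "nat \<Rightarrow> (nat \<Rightarrow> real ^ 'n) \<Rightarrow> real" where
  "perim m a = (\<Sum>i<m. norm (a i - a (cnext m i)))"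

definition gdir :: "nat \<Rightarrow> (nat \<Rightarrow> real ^ 'n) \<Rightarrow> nat \<Rightarrow> real ^ 'n" where
  "gdir m a i =
     (1 / norm (a i - a (cprev m i))) *\<^sub>R (a i - a (cprev m i)) +
     (1 / norm (a i - a (cnext m i))) *\<^sub>R (a i - a (cnext m i))"

end

theory Submission
  imports Defs
begin

lemma cnext_lt: "0 < m \<Longrightarrow> cnext m i < m"
  by (simp add: cnext_def)

lemma cprev_lt: "0 < m \<Longrightarrow> cprev m i < m"
  by (simp add: cprev_def)

lemma cnext_cprev: "0 < m \<Longrightarrow> i < m \<Longrightarrow> cnext m (cprev m i) = i"
proof -
  assume "0 < m" "i < m"
  have "cnext m (cprev m i) = ((i + m - 1) mod m + 1) mod m" by (simp add: cnext_def cprev_def)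
  also have "\<dots> = (i + m - 1 + 1) mod m" by (simp add: mod_Suc_eq)
  also have "\<dots> = (i + m) mod m" using \<open>0 < m\<close> by simp
  also have "\<dots> = i" using \<open>i < m\<close> by simp
  finally show ?thesis .
qed

lemma sum_cnext:
  assumes "0 < m"
  shows "(\<Sum>i<m. f (cnext m i)) = (\<Sum>i<m. f i)"
proof -
  have "bij_betw (cnext m) {..<m} {..<m}"
  proof (rule bij_betw_imageI)
    show "inj_on (cnext m) {..<m}"
    proof (rule inj_onI)
      fix i j assume "i \<in> {..<m}" "j \<in> {..<m}" "cnext m i = cnext m j"
      then have "cprev m (cnext m i) = cprev m (cnext m j)" by simp
      moreover have "cprev m (cnext m k) = k" if "k < m" for k
      proof -
        have "cprev m (cnext m k) = ((k + 1) mod m + m - 1) mod m" by (simp add: cnext_def cprev_def)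
        also have "\<dots> = ((k + 1) mod m + (m - 1)) mod m" using assms
          by (metis Nat.add_diff_assoc One_nat_def Suc_leI)
        also have "\<dots> = (k + 1 + (m - 1)) mod m" by (simp add: mod_add_left_eq)
        also have "\<dots> = (k + m) mod m" using assms by simp
        also have "\<dots> = k" using that by simp
        finally show ?thesis .
      qed
      ultimately show "i = j" using \<open>i \<in> {..<m}\<close> \<open>j \<in> {..<m}\<close> by simp
    qed
    show "cnext m ` {..<m} = {..<m}"
    proof
      show "cnext m ` {..<m} \<subseteq> {..<m}" using cnext_lt[OF assms] by auto
      show "{..<m} \<subseteq> cnext m ` {..<m}"
      proof
        fix j assume "j \<in> {..<m}"
        then have "j = cnext m (cprev m j)" using cnext_cprev[OF assms] by simp
        then show "j \<in> cnext m ` {..<m}" using cprev_lt[OF assms] by blast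
      qed
    qed
  qed
  then show ?thesis by (rule sum.reindex_bij_betw)
qed

lemma norm_unit_le: "norm ((1 / norm d) *\<^sub>R (d::'a::real_normed_vector)) \<le> 1"
  by (cases "d = 0") auto

lemma inner_unit_self: "((1 / norm d) *\<^sub>R (d::'a::real_inner)) \<bullet> d = norm d"
  by (cases "d = 0") (auto simp: power2_norm_eq_inner[symmetric] power2_eq_square)

lemma gdir_norm: "norm (gdir m a i) \<le> 2"
proof -
  have "norm (gdir m a i) \<le> norm ((1 / norm (a i - a (cprev m i))) *\<^sub>R (a i - a (cprev m i)))
     + norm ((1 / norm (a i - a (cnext m i))) *\<^sub>R (a i - a (cnext m i)))"
    unfolding gdir_def by (rule norm_triangle_ineq)
  then show ?thesis using norm_unit_le[of "a i - a (cprev m i)"] norm_unit_le[of "a i - a (cnext m i)"]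
    by linarith
qed

lemma norm_le_perim: "i < m \<Longrightarrow> norm (b i - b (cnext m i)) \<le> perim m b"
  unfolding perim_def by (rule member_le_sum) auto

lemma perim_nonneg: "0 \<le> perim m b"
  unfolding perim_def by (simp add: sum_nonneg)

lemma subgrad:
  fixes a y :: "nat \<Rightarrow> real ^ 'n"
  assumes m0: "0 < m"
  shows "(\<Sum>i<m. gdir m a i \<bullet> (y i - a i)) \<le> perim m y - perim m a"
proof -
  define u where "u i = (1 / norm (a i - a (cnext m i))) *\<^sub>R (a i - a (cnext m i))" for i
  have w: "(1 / norm (a i - a (cprev m i))) *\<^sub>R (a i - a (cprev m i)) = - u (cprev m i)" if "i < m" for i
  proof -
    have "u (cprev m i) = (1/norm(a (cprev m i) - a i)) *\<^sub>R (a (cprev m i) - a i)"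
      by (simp add: u_def cnext_cprev[OF m0 that])
    then show ?thesis by (metis minus_diff_eq norm_minus_commute scaleR_minus_right)
  qed
  define z where "z i = y i - a i" for i
  have "(\<Sum>i<m. gdir m a i \<bullet> (y i - a i)) = (\<Sum>i<m. u i \<bullet> z i) - (\<Sum>i<m. u (cprev m i) \<bullet> z i)"
  proof -
    have "gdir m a i = u i - u (cprev m i)" if "i < m" for i
      unfolding gdir_def using w[OF that] by (simp add: u_def)
    then have "(\<Sum>i<m. gdir m a i \<bullet> (y i - a i)) = (\<Sum>i<m. u i \<bullet> z i - u (cprev m i) \<bullet> z i)"
      by (intro sum.cong) (simp_all add: z_def inner_diff_left)
    then show ?thesis by (simp add: sum_subtractf)
  qed
  also have "(\<Sum>i<m. u (cprev m i) \<bullet> z i) = (\<Sum>i<m. u (cprev m (cnext m i)) \<bullet> z (cnext m i))"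
    by (rule sum_cnext[OF m0, symmetric])
  also have "\<dots> = (\<Sum>i<m. u i \<bullet> z (cnext m i))"
  proof (rule sum.cong)
    fix i assume "i \<in> {..<m}"
    have "cprev m (cnext m i) = i"
    proof -
      have "cprev m (cnext m i) = ((i + 1) mod m + m - 1) mod m" by (simp add: cnext_def cprev_def)
      also have "\<dots> = ((i + 1) mod m + (m - 1)) mod m" using m0
        by (metis Nat.add_diff_assoc One_nat_def Suc_leI)
      also have "\<dots> = (i + 1 + (m - 1)) mod m" by (simp add: mod_add_left_eq)
      also have "\<dots> = (i + m) mod m" using m0 by simp
      also have "\<dots> = i" using \<open>i \<in> {..<m}\<close> by simp
      finally show ?thesis .
    qed
    then show "u (cprev m (cnext m i)) \<bullet> z (cnext m i) = u i \<bullet> z (cnext m i)" by simp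
  qed simp
  also have "(\<Sum>i<m. u i \<bullet> z i) - (\<Sum>i<m. u i \<bullet> z (cnext m i))
      = (\<Sum>i<m. u i \<bullet> (y i - y (cnext m i)) - u i \<bullet> (a i - a (cnext m i)))"
    by (simp add: z_def sum_subtractf[symmetric] inner_diff_right algebra_simps)
  also have "\<dots> \<le> (\<Sum>i<m. norm (y i - y (cnext m i)) - norm (a i - a (cnext m i)))"
  proof (rule sum_mono)
    fix i
    have "u i \<bullet> (y i - y (cnext m i)) \<le> norm (u i) * norm (y i - y (cnext m i))"
      by (rule norm_cauchy_schwarz)
    also have "\<dots> \<le> norm (y i - y (cnext m i))"
      using norm_unit_le[of "a i - a (cnext m i)"] unfolding u_def[symmetric]
      by (simp add: mult_left_le_one_le)
    finally show "u i \<bullet> (y i - y (cnext m i)) - u i \<bullet> (a i - a (cnext m i))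
        \<le> norm (y i - y (cnext m i)) - norm (a i - a (cnext m i))"
      using inner_unit_self[of "a i - a (cnext m i)"] unfolding u_def by simp
  qed
  also have "\<dots> = perim m y - perim m a" by (simp add: perim_def sum_subtractf)
  finally show ?thesis .
qed

lemma proj_le:
  fixes S :: "(real ^ 'n) set"
  assumes "closed S" "convex S" "S \<noteq> {}" "z \<in> S"
  shows "norm (closest_point S p - z) \<le> norm (p - z)"
proof -
  have "dist (closest_point S p) (closest_point S z) \<le> dist p z"
    by (rule closest_point_lipschitz[OF assms(2,1,3)])
  then show ?thesis using closest_point_self[OF assms(4)] by (simp add: dist_norm)
qed

lemma perim_tendsto:
  fixes f :: "nat \<Rightarrow> nat \<Rightarrow> real ^ 'n"
  assumes m0: "0 < m" and lim: "\<forall>i<m. (\<lambda>k. f k i) \<longlonglongrightarrow> l i"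
  shows "(\<lambda>k. perim m (f k)) \<longlonglongrightarrow> perim m l"
  unfolding perim_def
proof (rule tendsto_sum)
  fix i assume "i \<in> {..<m}"
  then have "i < m" "cnext m i < m" using cnext_lt[OF m0] by auto
  then show "(\<lambda>k. norm (f k i - f k (cnext m i))) \<longlonglongrightarrow> norm (l i - l (cnext m i))"
    using lim by (intro tendsto_intros) auto
qed

lemma multi_subseq:
  fixes f :: "nat \<Rightarrow> nat \<Rightarrow> 'a::heine_borel"
  shows "(\<forall>i<m. bounded (range (\<lambda>k. f k i))) \<Longrightarrow>
    \<exists>l r. strict_mono r \<and> (\<forall>i<m. (\<lambda>k. f (r k) i) \<longlonglongrightarrow> l i)"
proof (induction m)
  case 0
  show ?case by (rule exI[of _ undefined], rule exI[of _ id]) (auto simp: strict_mono_def)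
next
  case (Suc m)
  then obtain l r where r: "strict_mono r" and lr: "\<forall>i<m. (\<lambda>k. f (r k) i) \<longlonglongrightarrow> l i" by auto
  have "bounded (range (\<lambda>k. f k m))" using Suc.prems by auto
  then have "bounded (range (\<lambda>k. f (r k) m))"
    by (rule bounded_subset) auto
  then obtain l' r' where r': "strict_mono r'" and lr': "((\<lambda>k. f (r k) m) \<circ> r') \<longlonglongrightarrow> l'"
    using bounded_imp_convergent_subsequence by blast
  show ?case
  proof (intro exI conjI allI impI)
    show "strict_mono (r \<circ> r')" using r r' by (rule strict_mono_o)
    fix i assume "i < Suc m"
    show "(\<lambda>k. f ((r \<circ> r') k) i) \<longlonglongrightarrow> (l(m := l')) i"
    proof (cases "i = m")
      case True then show ?thesis using lr' by (simp add: o_def)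
    next
      case False
      then have "i < m" using \<open>i < Suc m\<close> by simp
      then have "((\<lambda>k. f (r k) i) \<circ> r') \<longlonglongrightarrow> l i" using lr r' by (intro LIMSEQ_subseq_LIMSEQ) auto
      then show ?thesis using False by (simp add: o_def)
    qed
  qed
qed

lemma quasi_fejer:
  fixes u \<beta> :: "nat \<Rightarrow> real"
  assumes u0: "\<And>k. 0 \<le> u k" and b0: "\<And>k. 0 \<le> \<beta> k" and bs: "summable \<beta>"
    and step: "\<And>k. u (Suc k) \<le> u k + \<beta> k"
  shows "convergent u"
proof -
  define w where "w k = u k - (\<Sum>j<k. \<beta> j)" for k
  have dec: "decseq w" unfolding w_def
    by (rule decseq_SucI) (smt (verit) step sum.lessThan_Suc)
  have "\<forall>k. - suminf \<beta> \<le> w k"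
  proof
    fix k
    have "sum \<beta> {..<k} \<le> suminf \<beta>" by (rule sum_le_suminf[OF bs]) (auto simp: b0)
    then show "- suminf \<beta> \<le> w k" using u0[of k] unfolding w_def by simp
  qed
  then obtain L where L: "w \<longlonglongrightarrow> L" using decseq_convergent[OF dec] by blast
  have "(\<lambda>k. w k + (\<Sum>j<k. \<beta> j)) \<longlonglongrightarrow> L + suminf \<beta>"
    by (intro tendsto_add L summable_LIMSEQ bs)
  then show ?thesis unfolding w_def convergent_def by auto
qed

lemma at_top_bounded_False:
  fixes f :: "nat \<Rightarrow> real"
  assumes "filterlim f at_top sequentially" "\<And>k. f k \<le> B"
  shows False
proof -
  have "eventually (\<lambda>k. B + 1 \<le> f k) sequentially"
    using assms(1) unfolding filterlim_at_top by blast
  then obtain k where "B + 1 \<le> f k" unfolding eventually_sequentially by blast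
  then show False using assms(2)[of k] by simp
qed

lemma norm_step_sq:
  fixes v g :: "real ^ 'n"
  shows "(norm (v - t *\<^sub>R g))\<^sup>2 = (norm v)\<^sup>2 - 2 * t * (g \<bullet> v) + t\<^sup>2 * (norm g)\<^sup>2"
proof -
  have "(norm (v - t *\<^sub>R g))\<^sup>2 = (v - t *\<^sub>R g) \<bullet> (v - t *\<^sub>R g)" by (rule power2_norm_eq_inner)
  also have "\<dots> = v \<bullet> v - 2 * t * (g \<bullet> v) + t\<^sup>2 * (g \<bullet> g)"
    by (simp add: inner_diff_left inner_diff_right inner_commute power2_eq_square algebra_simps)
  also have "\<dots> = (norm v)\<^sup>2 - 2 * t * (g \<bullet> v) + t\<^sup>2 * (norm g)\<^sup>2"
    by (simp add: power2_norm_eq_inner)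
  finally show ?thesis .
qed

theorem mainTheorem6:
  fixes m :: nat
    and C :: "nat \<Rightarrow> (real ^ 'n) set"
    and \<alpha> :: "nat \<Rightarrow> real"
    and a :: "nat \<Rightarrow> nat \<Rightarrow> real ^ 'n"
  assumes m2: "m \<ge> 2"
    and nonempty: "\<forall>i<m. C i \<noteq> {}"
    and closed: "\<forall>i<m. closed (C i)"
    and convex: "\<forall>i<m. convex (C i)"
    and disjoint: "\<forall>i<m. \<forall>j<m. i \<noteq> j \<longrightarrow> C i \<inter> C j = {}"
    and growth: "(\<forall>i<m. bounded (C i)) \<or>
       (\<forall>j<m. \<not> bounded (C j) \<longrightarrow>
          (\<forall>s :: nat \<Rightarrow> real ^ 'n. (\<forall>k. s k \<in> C j) \<and>
              filterlim (\<lambda>k. norm (s k)) at_top sequentially \<longrightarrow>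
              filterlim (\<lambda>k. infdist (s k) (C (cprev m j))) at_top sequentially \<or>
              filterlim (\<lambda>k. infdist (s k) (C (cnext m j))) at_top sequentially))"
    and init: "\<forall>i<m. a 0 i \<in> C i"
    and step_pos: "\<forall>k. \<alpha> k > 0"
    and step_div: "\<not> summable \<alpha>"
    and step_sq: "summable (\<lambda>k. (\<alpha> k)\<^sup>2)"
    and iter: "\<forall>k. \<forall>i<m.
       a (Suc k) i = closest_point (C i) (a k i - \<alpha> k *\<^sub>R gdir m (a k) i)"
  shows "\<exists>astar :: nat \<Rightarrow> real ^ 'n.
     (\<forall>i<m. astar i \<in> C i) \<and>
     (\<forall>b. (\<forall>i<m. b i \<in> C i) \<longrightarrow> perim m astar \<le> perim m b) \<and>
     (\<forall>i<m. (\<lambda>k. a k i) \<longlonglongrightarrow> astar i) \<and>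
     perim m astar = (INF b\<in>{b. \<forall>i<m. b i \<in> C i}. perim m b) \<and>
     (\<lambda>k. perim m (a k)) \<longlonglongrightarrow> perim m astar"
proof -
  have m0: "0 < m" using m2 by simp
  define S where "S = {b. \<forall>i<m. b i \<in> C i}"
  have inC: "\<forall>i<m. a k i \<in> C i" for k
  proof (induction k)
    case 0 show ?case using init by simp
  next
    case (Suc k) show ?case using iter closed nonempty by (auto intro: closest_point_in_set)
  qed
  then have aS: "a k \<in> S" for k unfolding S_def by simp
  define Dstar where "Dstar = (INF b\<in>S. perim m b)"
  have bdd: "bdd_below (perim m ` S)" by (rule bdd_belowI[of _ 0]) (auto simp: perim_nonneg)
  have Dle: "Dstar \<le> perim m b" if "b \<in> S" for b
    unfolding Dstar_def using bdd that by (rule cINF_lower2) simp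
  have near: "\<exists>b\<in>S. perim m b < Dstar + 1 / real (Suc k)" for k
  proof (rule ccontr)
    assume "\<not> ?thesis"
    then have "\<forall>b\<in>S. Dstar + 1 / real (Suc k) \<le> perim m b" by auto
    then have "Dstar + 1 / real (Suc k) \<le> Dstar" unfolding Dstar_def using aS
      by (intro cINF_greatest) auto
    then show False by simp
  qed
  then obtain bs where bsS: "\<And>k. bs k \<in> S" and bsD: "\<And>k. perim m (bs k) < Dstar + 1 / real (Suc k)"
    by metis
  have bsD1: "perim m (bs k) \<le> Dstar + 1" for k
  proof -
    have "1 / real (Suc k) \<le> 1" by simp
    then show ?thesis using bsD[of k] by linarith
  qed
  have bbd: "\<forall>j<m. bounded (range (\<lambda>k. bs k j))"
  proof (intro allI impI, rule ccontr)
    fix j assume j: "j < m" and nb: "\<not> bounded (range (\<lambda>k. bs k j))"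
    have "\<exists>k. real N \<le> norm (bs k j)" for N :: nat
    proof (rule ccontr)
      assume "\<not> ?thesis"
      then have "\<forall>x\<in>range (\<lambda>k. bs k j). norm x \<le> real N" by (auto simp: not_le less_imp_le)
      then show False using nb unfolding bounded_iff by blast
    qed
    then obtain kk where kk: "\<And>N. real N \<le> norm (bs (kk N) j)" by metis
    define s where "s N = bs (kk N) j" for N
    have sC: "\<forall>N. s N \<in> C j" using bsS j unfolding s_def S_def by auto
    have slim: "filterlim (\<lambda>N. norm (s N)) at_top sequentially"
      by (rule filterlim_at_top_mono[OF filterlim_real_sequentially]) (auto simp: s_def kk)
    have unbC: "\<not> bounded (C j)"
    proof
      assume "bounded (C j)"
      moreover have "range (\<lambda>k. bs k j) \<subseteq> C j" using bsS j unfolding S_def by auto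
      ultimately show False using nb bounded_subset by blast
    qed
    then have "\<not> (\<forall>i<m. bounded (C i))" using j by blast
    then have gr: "filterlim (\<lambda>k. infdist (s k) (C (cprev m j))) at_top sequentially \<or>
              filterlim (\<lambda>k. infdist (s k) (C (cnext m j))) at_top sequentially"
      using growth j unbC sC slim by blast
    have b1: "infdist (s N) (C (cprev m j)) \<le> Dstar + 1" for N
    proof -
      have "cprev m j < m" using cprev_lt[OF m0] .
      then have "bs (kk N) (cprev m j) \<in> C (cprev m j)" using bsS unfolding S_def by auto
      then have "infdist (s N) (C (cprev m j)) \<le> dist (s N) (bs (kk N) (cprev m j))"
        by (rule infdist_le)
      also have "\<dots> = norm (bs (kk N) (cprev m j) - bs (kk N) (cnext m (cprev m j)))"
        unfolding s_def using cnext_cprev[OF m0 j] by (simp add: dist_norm norm_minus_commute)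
      also have "\<dots> \<le> perim m (bs (kk N))" by (rule norm_le_perim) (rule cprev_lt[OF m0])
      finally show ?thesis using bsD1[of "kk N"] by linarith
    qed
    have b2: "infdist (s N) (C (cnext m j)) \<le> Dstar + 1" for N
    proof -
      have "cnext m j < m" using cnext_lt[OF m0] .
      then have "bs (kk N) (cnext m j) \<in> C (cnext m j)" using bsS unfolding S_def by auto
      then have "infdist (s N) (C (cnext m j)) \<le> dist (s N) (bs (kk N) (cnext m j))"
        by (rule infdist_le)
      also have "\<dots> = norm (bs (kk N) j - bs (kk N) (cnext m j))"
        unfolding s_def by (simp add: dist_norm)
      also have "\<dots> \<le> perim m (bs (kk N))" by (rule norm_le_perim) (rule j)
      finally show ?thesis using bsD1[of "kk N"] by linarith
    qed
    show False using gr at_top_bounded_False[of "\<lambda>N. infdist (s N) (C (cprev m j))", OF _ b1]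
      at_top_bounded_False[of "\<lambda>N. infdist (s N) (C (cnext m j))", OF _ b2] by blast
  qed
  obtain xs r where r: "strict_mono r" and xsl: "\<forall>i<m. (\<lambda>k. bs (r k) i) \<longlonglongrightarrow> xs i"
    using multi_subseq[OF bbd] by blast
  have xsS: "xs \<in> S" unfolding S_def
  proof (intro CollectI allI impI)
    fix i assume i: "i < m"
    show "xs i \<in> C i"
      by (rule closed_sequentially[of "C i" "\<lambda>k. bs (r k) i"])
         (use closed i bsS xsl in \<open>auto simp: S_def\<close>)
  qed
  have inv0: "(\<lambda>k. inverse (real (Suc k))) \<longlonglongrightarrow> 0" by (rule LIMSEQ_inverse_real_of_nat)
  have t1: "(\<lambda>k. perim m (bs (r k))) \<longlonglongrightarrow> perim m xs" by (rule perim_tendsto[OF m0 xsl])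
  have t2: "(\<lambda>k. perim m (bs (r k))) \<longlonglongrightarrow> Dstar"
  proof (rule tendsto_sandwich[of "\<lambda>k. Dstar" _ _ "\<lambda>k. Dstar + inverse (real (Suc k))"])
    show "eventually (\<lambda>k. Dstar \<le> perim m (bs (r k))) sequentially" using Dle bsS by auto
    show "eventually (\<lambda>k. perim m (bs (r k)) \<le> Dstar + inverse (real (Suc k))) sequentially"
    proof (rule always_eventually, rule allI)
      fix k
      have "k \<le> r k" using r by (rule seq_suble)
      then have "1 / real (Suc (r k)) \<le> inverse (real (Suc k))"
        by (simp add: inverse_eq_divide frac_le)
      then show "perim m (bs (r k)) \<le> Dstar + inverse (real (Suc k))" using bsD[of "r k"] by linarith
    qed
    show "(\<lambda>k. Dstar + inverse (real (Suc k))) \<longlonglongrightarrow> Dstar" using tendsto_add[OF tendsto_const inv0] by simp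
  qed simp
  have xsD: "perim m xs = Dstar" using t1 t2 by (rule LIMSEQ_unique)
  have xsmin: "perim m xs \<le> perim m b" if "b \<in> S" for b using Dle[OF that] xsD by simp
  define V where "V x k = (\<Sum>i<m. (norm (a k i - x i))\<^sup>2)" for x k
  have V0: "0 \<le> V x k" for x k unfolding V_def by (simp add: sum_nonneg)
  have key: "V x (Suc k) \<le> V x k - 2 * \<alpha> k * (perim m (a k) - perim m x) + 4 * real m * (\<alpha> k)\<^sup>2"
    if xS: "x \<in> S" for x k
  proof -
    define g where "g i = gdir m (a k) i" for i
    have each: "(norm (a (Suc k) i - x i))\<^sup>2
        \<le> (norm (a k i - x i))\<^sup>2 + 2 * \<alpha> k * (g i \<bullet> (x i - a k i)) + (\<alpha> k)\<^sup>2 * 4"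
      if i: "i < m" for i
    proof -
      have "norm (a (Suc k) i - x i) \<le> norm ((a k i - x i) - \<alpha> k *\<^sub>R g i)"
        using proj_le[of "C i" "x i" "a k i - \<alpha> k *\<^sub>R g i"] closed convex nonempty xS i iter
        unfolding S_def g_def by (simp add: algebra_simps)
      then have "(norm (a (Suc k) i - x i))\<^sup>2 \<le> (norm ((a k i - x i) - \<alpha> k *\<^sub>R g i))\<^sup>2"
        by (simp add: power_mono)
      also have "\<dots> = (norm (a k i - x i))\<^sup>2 - 2 * \<alpha> k * (g i \<bullet> (a k i - x i)) + (\<alpha> k)\<^sup>2 * (norm (g i))\<^sup>2"
        by (rule norm_step_sq)
      also have "\<dots> \<le> (norm (a k i - x i))\<^sup>2 + 2 * \<alpha> k * (g i \<bullet> (x i - a k i)) + (\<alpha> k)\<^sup>2 * 4"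
      proof -
        have "norm (g i) \<le> 2" unfolding g_def by (rule gdir_norm)
        then have "(norm (g i))\<^sup>2 \<le> 2\<^sup>2" by (rule power_mono) simp
        then have "(\<alpha> k)\<^sup>2 * (norm (g i))\<^sup>2 \<le> (\<alpha> k)\<^sup>2 * 4" by (simp add: mult_left_mono)
        moreover have "g i \<bullet> (a k i - x i) = - (g i \<bullet> (x i - a k i))" by (simp add: inner_diff_right)
        ultimately show ?thesis by simp
      qed
      finally show ?thesis .
    qed
    have "V x (Suc k) \<le> (\<Sum>i<m. (norm (a k i - x i))\<^sup>2 + 2 * \<alpha> k * (g i \<bullet> (x i - a k i)) + (\<alpha> k)\<^sup>2 * 4)"
      unfolding V_def by (rule sum_mono) (use each in auto)
    also have "\<dots> = V x k + 2 * \<alpha> k * (\<Sum>i<m. g i \<bullet> (x i - a k i)) + 4 * real m * (\<alpha> k)\<^sup>2"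
      unfolding V_def by (simp add: sum.distrib sum_distrib_left)
    also have "\<dots> \<le> V x k + 2 * \<alpha> k * (perim m x - perim m (a k)) + 4 * real m * (\<alpha> k)\<^sup>2"
    proof -
      have "(\<Sum>i<m. g i \<bullet> (x i - a k i)) \<le> perim m x - perim m (a k)"
        unfolding g_def by (rule subgrad[OF m0])
      then show ?thesis using step_pos[rule_format, of k] by (simp add: mult_left_mono)
    qed
    finally show ?thesis by (simp add: algebra_simps)
  qed
  have sq4: "summable (\<lambda>k. 4 * real m * (\<alpha> k)\<^sup>2)" by (rule summable_mult[OF step_sq])
  have fe: "convergent (V x)" if xS: "x \<in> S" and xD: "perim m x = Dstar" for x
  proof (rule quasi_fejer[OF V0 _ sq4])
    fix k
    have "perim m x \<le> perim m (a k)" using xD Dle[OF aS] by simp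
    then have "0 \<le> 2 * \<alpha> k * (perim m (a k) - perim m x)" using step_pos[rule_format, of k] by simp
    then show "V x (Suc k) \<le> V x k + 4 * real m * (\<alpha> k)\<^sup>2" using key[OF xS, of k] by linarith
  qed simp
  define e where "e k = perim m (a k) - Dstar" for k
  have e0: "0 \<le> e k" for k unfolding e_def using Dle[OF aS] by simp
  have partial: "2 * (\<Sum>k<N. \<alpha> k * e k) \<le> V xs 0 - V xs N + 4 * real m * (\<Sum>k<N. (\<alpha> k)\<^sup>2)" for N
  proof (induction N)
    case 0 show ?case by simp
  next
    case (Suc N)
    have "V xs (Suc N) \<le> V xs N - 2 * \<alpha> N * e N + 4 * real m * (\<alpha> N)\<^sup>2"
      using key[OF xsS, of N] xsD unfolding e_def by simp
    then show ?case using Suc.IH by (simp add: algebra_simps)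
  qed
  have sae: "summable (\<lambda>k. \<alpha> k * e k)"
  proof (rule summableI_nonneg_bounded)
    show "0 \<le> \<alpha> k * e k" for k using step_pos e0 by (simp add: less_imp_le)
    fix N
    have "(\<Sum>k<N. (\<alpha> k)\<^sup>2) \<le> suminf (\<lambda>k. (\<alpha> k)\<^sup>2)" by (rule sum_le_suminf[OF step_sq]) auto
    then have "4 * real m * (\<Sum>k<N. (\<alpha> k)\<^sup>2) \<le> 4 * real m * suminf (\<lambda>k. (\<alpha> k)\<^sup>2)"
      by (simp add: mult_left_mono)
    then show "(\<Sum>k<N. \<alpha> k * e k) \<le> (V xs 0 + 4 * real m * suminf (\<lambda>k. (\<alpha> k)\<^sup>2)) / 2"
      using partial[of N] V0[of xs N] by (simp add: field_simps)
  qed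
  have often: "\<exists>k\<ge>N. e k < eps" if eps: "eps > 0" for N eps
  proof (rule ccontr)
    assume "\<not> ?thesis"
    then have ge: "\<forall>k\<ge>N. eps \<le> e k" by (auto simp: not_less)
    have "summable \<alpha>"
    proof (rule summable_comparison_test'[OF summable_divide[OF sae, of eps]])
      fix k assume "N \<le> k"
      then have "\<alpha> k * eps \<le> \<alpha> k * e k" using ge step_pos by (simp add: less_imp_le mult_left_mono)
      then show "norm (\<alpha> k) \<le> \<alpha> k * e k / eps" using eps step_pos[rule_format, of k]
        by (simp add: pos_le_divide_eq)
    qed
    then show False using step_div by simp
  qed
  have "\<exists>k\<ge>j. e k < 1 / real (Suc j)" for j by (rule often) simp
  then obtain kk where kkge: "\<And>j. j \<le> kk j" and kke: "\<And>j. e (kk j) < 1 / real (Suc j)" by metis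
  obtain K where K: "\<And>k. norm (V xs k) \<le> K"
    using convergent_imp_Bseq[OF fe[OF xsS xsD]] unfolding Bseq_def by blast
  have abd: "bounded (range (\<lambda>k. a k i))" if i: "i < m" for i
  proof -
    have "norm (a k i) \<le> norm (xs i) + (1 + K)" for k
    proof -
      have "(norm (a k i - xs i))\<^sup>2 \<le> V xs k" unfolding V_def
        by (rule member_le_sum[of i "{..<m}" "\<lambda>i. (norm (a k i - xs i))\<^sup>2"]) (use i in auto)
      also have "\<dots> \<le> K" using K[of k] by simp
      finally have sq: "(norm (a k i - xs i))\<^sup>2 \<le> K" .
      have "norm (a k i - xs i) \<le> 1 + K"
      proof (cases "norm (a k i - xs i) \<le> 1")
        case True then show ?thesis using sq by (smt (verit) zero_le_power2)
      next
        case False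
        then have "norm (a k i - xs i) * 1 \<le> norm (a k i - xs i) * norm (a k i - xs i)"
          by (intro mult_left_mono) auto
        then have "norm (a k i - xs i) \<le> (norm (a k i - xs i))\<^sup>2" by (simp add: power2_eq_square)
        then show ?thesis using sq by simp
      qed
      moreover have "norm (a k i) \<le> norm (xs i) + norm (a k i - xs i)"
        by (metis add.commute diff_add_cancel norm_triangle_ineq)
      ultimately show ?thesis by simp
    qed
    then show ?thesis unfolding bounded_iff by blast
  qed
  have abd2: "\<forall>i<m. bounded (range (\<lambda>j. a (kk j) i))"
    using abd by (auto intro: bounded_subset)
  obtain xb r2 where r2: "strict_mono r2" and xbl: "\<forall>i<m. (\<lambda>j. a (kk (r2 j)) i) \<longlonglongrightarrow> xb i"
    using multi_subseq[OF abd2] by blast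
  have xbS: "xb \<in> S" unfolding S_def
  proof (intro CollectI allI impI)
    fix i assume i: "i < m"
    show "xb i \<in> C i"
      by (rule closed_sequentially[of "C i" "\<lambda>j. a (kk (r2 j)) i"])
         (use closed i inC xbl in \<open>auto\<close>)
  qed
  have u1: "(\<lambda>j. perim m (a (kk (r2 j)))) \<longlonglongrightarrow> perim m xb" by (rule perim_tendsto[OF m0 xbl])
  have u2: "(\<lambda>j. perim m (a (kk (r2 j)))) \<longlonglongrightarrow> Dstar"
  proof (rule tendsto_sandwich[of "\<lambda>k. Dstar" _ _ "\<lambda>k. Dstar + inverse (real (Suc k))"])
    show "eventually (\<lambda>k. Dstar \<le> perim m (a (kk (r2 k)))) sequentially" using Dle aS by auto
    show "eventually (\<lambda>k. perim m (a (kk (r2 k))) \<le> Dstar + inverse (real (Suc k))) sequentially"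
    proof (rule always_eventually, rule allI)
      fix k
      have "k \<le> r2 k" using r2 by (rule seq_suble)
      then have "1 / real (Suc (r2 k)) \<le> inverse (real (Suc k))"
        by (simp add: inverse_eq_divide frac_le)
      then show "perim m (a (kk (r2 k))) \<le> Dstar + inverse (real (Suc k))"
        using kke[of "r2 k"] unfolding e_def by linarith
    qed
    show "(\<lambda>k. Dstar + inverse (real (Suc k))) \<longlonglongrightarrow> Dstar" using tendsto_add[OF tendsto_const inv0] by simp
  qed simp
  have xbD: "perim m xb = Dstar" using u1 u2 by (rule LIMSEQ_unique)
  obtain L where L: "V xb \<longlonglongrightarrow> L" using fe[OF xbS xbD] unfolding convergent_def by blast
  have tinf: "filterlim (\<lambda>j. kk (r2 j)) sequentially sequentially"
  proof (rule filterlim_at_top_mono[OF filterlim_ident])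
    show "eventually (\<lambda>j. j \<le> kk (r2 j)) sequentially"
    proof (rule always_eventually, rule allI)
      fix j show "j \<le> kk (r2 j)" using kkge[of "r2 j"] seq_suble[OF r2, of j] by linarith
    qed
  qed
  have "(\<lambda>j. V xb (kk (r2 j))) \<longlonglongrightarrow> L" by (rule filterlim_compose[OF L tinf])
  moreover have "(\<lambda>j. V xb (kk (r2 j))) \<longlonglongrightarrow> (\<Sum>i<m. (norm (xb i - xb i))\<^sup>2)"
    unfolding V_def by (intro tendsto_sum tendsto_intros) (use xbl in auto)
  ultimately have L0: "L = 0" using LIMSEQ_unique by fastforce
  have conv: "(\<lambda>k. a k i) \<longlonglongrightarrow> xb i" if i: "i < m" for i
  proof -
    have "(\<lambda>k. (norm (a k i - xb i))\<^sup>2) \<longlonglongrightarrow> 0"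
    proof (rule tendsto_sandwich[of "\<lambda>k. 0" _ _ "V xb"])
      show "eventually (\<lambda>k. (norm (a k i - xb i))\<^sup>2 \<le> V xb k) sequentially" unfolding V_def
        by (rule always_eventually, rule allI,
            rule member_le_sum[of i "{..<m}" "\<lambda>i. (norm (a _ i - xb i))\<^sup>2"]) (use i in auto)
      show "V xb \<longlonglongrightarrow> 0" using L L0 by simp
    qed auto
    then have "(\<lambda>k. sqrt ((norm (a k i - xb i))\<^sup>2)) \<longlonglongrightarrow> sqrt 0" by (rule tendsto_real_sqrt)
    then have "(\<lambda>k. norm (a k i - xb i)) \<longlonglongrightarrow> 0" by simp
    then have "(\<lambda>k. a k i - xb i) \<longlonglongrightarrow> 0" by (simp add: tendsto_norm_zero_iff)
    then show ?thesis by (simp add: Lim_null[symmetric])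
  qed
  show ?thesis
  proof (intro exI conjI allI impI)
    show "xb i \<in> C i" if "i < m" for i using xbS that unfolding S_def by auto
    show "perim m xb \<le> perim m b" if "\<forall>i<m. b i \<in> C i" for b
      using Dle[of b] that xbD unfolding S_def by auto
    show "(\<lambda>k. a k i) \<longlonglongrightarrow> xb i" if "i < m" for i using conv that by simp
    show "perim m xb = (INF b\<in>{b. \<forall>i<m. b i \<in> C i}. perim m b)" using xbD unfolding Dstar_def S_def .
    show "(\<lambda>k. perim m (a k)) \<longlonglongrightarrow> perim m xb" by (rule perim_tendsto[OF m0]) (use conv in auto)
  qed
qed

end
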